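(* In the setting described in the context, the matrices $\boldsymbol{\Psi}\in\mathbb{C}^{(2D-2)\times(2D-2)}$ and $\mathbf{F}\in\mathbb{C}^{(M^2-M)\times(M^2-M)}$ are non-singular, and $\overline{\mathbf{J}}\in\{0,1\}^{(M^2-M)\times(2D-2)}$ has full column rank.
   Context: Let $\{m_1,\dots,m_M\}$ be $M$ distinct integers, $\mathbb{D}=\{|m_p-m_q|:1\le p,q\le M\}=\{\ell_0,\dots,\ell_{D-1}\}$ with $0=\ell_0<\ell_1<\dots<\ell_{D-1}$. For $0\le n\le D-1$ let $\mathbf{L}_n\in\{0,1\}^{M\times M}$ with $[\mathbf{L}_n]_{p,q}=1$ if $m_p-m_q=\ell_n$ and $0$ otherwise. Let $\mathbf{J}=[\mathrm{vec}(\mathbf{L}_{D-1}^T),\dots,\mathrm{vec}(\mathbf{L}_1^T),\mathrm{vec}(\mathbf{L}_0),\mathrm{vec}(\mathbf{L}_1),\dots,\mathrm{vec}(\mathbf{L}_{D-1})]\in\{0,1\}^{M^2\times(2D-1)}$ ($\mathrm{vec}$ stacks columns). The indices $(i-1)M+i$, $1\le i\le M$, are the positions of the diagonal entries in $\mathrm{vec}$ of an $M\times M$ matrix. $\overline{\mathbf{J}}$ is obtained from $\mathbf{J}$ by removing its $D$-th column and its rows with indices $(i-1)M+i$, $1\le i\le M$. $\boldsymbol{\Psi}=\begin{bmatrix}\mathbf{I}_{D-1}&-j\mathbf{I}_{D-1}\\ \mathbf{I}_{D-1}&j\mathbf{I}_{D-1}\end{bmatrix}$. Let $\overline{\mathbf{e}}_p\in\mathbb{R}^M$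 be the $p$-th standard basis vector. For $1\le p<q\le M$ set $s(p,q)=(p-1)M+q-\frac{p(p+1)}{2}\in\{1,\dots,\frac{M^2-M}{2}\}$. Define $\ddot{\mathbf{F}},\widetilde{\mathbf{F}}\in\{0,\pm1\}^{\frac{M^2-M}{2}\times(M^2-M)}$ by: row $s(p,q)$ of $\ddot{\mathbf{F}}$ (resp. $\widetilde{\mathbf{F}}$) is obtained from the row vector $\overline{\mathbf{e}}_p^T\otimes\overline{\mathbf{e}}_q^T+\overline{\mathbf{e}}_q^T\otimes\overline{\mathbf{e}}_p^T$ (resp. $\overline{\mathbf{e}}_p^T\otimes\overline{\mathbf{e}}_q^T-\overline{\mathbf{e}}_q^T\otimes\overline{\mathbf{e}}_p^T$) by removing its entries with indices $(i-1)M+i$, $1\le i\le M$. Finally $\mathbf{F}=\frac12\begin{bmatrix}\ddot{\mathbf{F}}\\ j\widetilde{\mathbf{F}}\end{bmatrix}$. *)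

theory Defs
  imports Complex_Main "Jordan_Normal_Form.DL_Rank" "Jordan_Normal_Form.DL_Submatrix"
begin

text \<open>Conventions: the integers are m 1, ..., m M (1-based, as in the paper).
  Matrices of the Jordan_Normal_Form library are 0-based, so the paper's entry
  (p,q) is entry (p-1,q-1) here, and the paper's vec-index k (1-based) is k-1 here.\<close>

definition diffset :: "nat \<Rightarrow> (nat \<Rightarrow> int) \<Rightarrow> int set" where
  "diffset M m = {\<bar>m p - m q\<bar> | p q. p \<in> {1..M} \<and> q \<in> {1..M}}"

definition numD :: "nat \<Rightarrow> (nat \<Rightarrow> int) \<Rightarrow> nat" where
  "numD M m = card (diffset M m)"

definition lag :: "nat \<Rightarrow> (nat \<Rightarrow> int) \<Rightarrow> nat \<Rightarrow> int" where
  "lag M m n = sorted_list_of_set (diffset M m) ! n"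

definition Lmat :: "nat \<Rightarrow> (nat \<Rightarrow> int) \<Rightarrow> nat \<Rightarrow> complex mat" where
  "Lmat M m n = mat M M (\<lambda>(i,j). if m (i+1) - m (j+1) = lag M m n then 1 else 0)"

definition vecm :: "'a mat \<Rightarrow> 'a vec" where
  "vecm A = vec (dim_row A * dim_col A) (\<lambda>k. A $$ (k mod dim_row A, k div dim_row A))"

definition Jmat :: "nat \<Rightarrow> (nat \<Rightarrow> int) \<Rightarrow> complex mat" where
  "Jmat M m = (let D = numD M m in
     mat (M*M) (2*D-1) (\<lambda>(k,c).
       if c < D - 1 then vecm (transpose_mat (Lmat M m (D - 1 - c))) $ k
       else vecm (Lmat M m (c - (D - 1))) $ k))"

text \<open>Diagonal positions (i-1)M+i, 1<=i<=M, in 1-based vec indexing.\<close>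
definition diag_idx :: "nat \<Rightarrow> nat set" where
  "diag_idx M = {(i-1)*M + i | i. 1 \<le> i \<and> i \<le> M}"

definition Jbar :: "nat \<Rightarrow> (nat \<Rightarrow> int) \<Rightarrow> complex mat" where
  "Jbar M m = submatrix (Jmat M m) {k. Suc k \<notin> diag_idx M} {c. Suc c \<noteq> numD M m}"

definition Psi :: "nat \<Rightarrow> complex mat" where
  "Psi D = four_block_mat (1\<^sub>m (D-1)) ((-\<i>) \<cdot>\<^sub>m 1\<^sub>m (D-1))
                          (1\<^sub>m (D-1)) (\<i> \<cdot>\<^sub>m 1\<^sub>m (D-1))"

definition sidx :: "nat \<Rightarrow> nat \<Rightarrow> nat \<Rightarrow> nat" where
  "sidx M p q = (p-1)*M + q - p*(p+1) div 2"

text \<open>Row vector e_p^T (Kronecker) e_q^T of length M^2 (0-based index).\<close>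
definition kron_e :: "nat \<Rightarrow> nat \<Rightarrow> nat \<Rightarrow> complex vec" where
  "kron_e M p q = vec (M*M) (\<lambda>k. if k = (p-1)*M + (q-1) then 1 else 0)"

definition pq_of :: "nat \<Rightarrow> nat \<Rightarrow> nat \<times> nat" where
  "pq_of M r = (THE pq. 1 \<le> fst pq \<and> fst pq < snd pq \<and> snd pq \<le> M \<and> sidx M (fst pq) (snd pq) = r)"

definition Fdd_full :: "nat \<Rightarrow> complex mat" where
  "Fdd_full M = mat ((M*M - M) div 2) (M*M) (\<lambda>(r,k).
     (case pq_of M (Suc r) of (p,q) \<Rightarrow> (kron_e M p q + kron_e M q p) $ k))"

definition Ftil_full :: "nat \<Rightarrow> complex mat" where
  "Ftil_full M = mat ((M*M - M) div 2) (M*M) (\<lambda>(r,k).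
     (case pq_of M (Suc r) of (p,q) \<Rightarrow> (kron_e M p q - kron_e M q p) $ k))"

definition Fdd :: "nat \<Rightarrow> complex mat" where
  "Fdd M = submatrix (Fdd_full M) UNIV {k. Suc k \<notin> diag_idx M}"

definition Ftil :: "nat \<Rightarrow> complex mat" where
  "Ftil M = submatrix (Ftil_full M) UNIV {k. Suc k \<notin> diag_idx M}"

definition Fmat :: "nat \<Rightarrow> complex mat" where
  "Fmat M = (let N = (M*M - M) div 2 in
     mat (M*M - M) (M*M - M) (\<lambda>(i,j).
       if i < N then Fdd M $$ (i,j) / 2 else \<i> * Ftil M $$ (i - N, j) / 2))"

end

theory Submission
  imports Defs
begin

lemma inv_of_ker:
  fixes A :: "'a::field mat"
  assumes A: "A \<in> carrier_mat n n"
    and ker: "\<And>v. v \<in> carrier_vec n \<Longrightarrow> A *\<^sub>v v = 0\<^sub>v n \<Longrightarrow> v = 0\<^sub>v n"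
  shows "invertible_mat A"
proof -
  have "det A \<noteq> 0" using det_0_iff_vec_prod_zero_field[OF A] ker by blast
  from det_non_zero_imp_unit[OF A this, of "()"]
  obtain B where B: "B \<in> carrier_mat n n" "A * B = 1\<^sub>m n" "B * A = 1\<^sub>m n"
    unfolding Units_def ring_mat_def by auto
  show ?thesis unfolding invertible_mat_def inverts_mat_def square_mat.simps
    using A B by (intro conjI exI[of _ B]) auto
qed

lemma rank_of_ker:
  fixes A :: "'a::field mat"
  assumes A: "A \<in> carrier_mat n nc"
    and ker: "\<And>v. v \<in> carrier_vec nc \<Longrightarrow> A *\<^sub>v v = 0\<^sub>v n \<Longrightarrow> v = 0\<^sub>v nc"
  shows "vec_space.rank n A = nc"
proof -
  have dist: "distinct (cols A)"
  proof (rule ccontr)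
    assume "\<not> distinct (cols A)"
    then obtain i j where ij: "i\<noteq>j" "(cols A) ! i = (cols A) ! j" "i<length (cols A)" "j<length (cols A)"
      using distinct_conv_nth by blast
    then have c: "col A i = col A j" "i<nc" "j<nc" using A by auto
    define v where "v = vec nc (\<lambda>k. (if k = i then 1 else 0) - (if k = j then 1 else 0) :: 'a)"
    have "A *\<^sub>v v = 0\<^sub>v n"
    proof (rule eq_vecI)
      fix r assume "r < dim_vec (0\<^sub>v n :: 'a vec)"
      then have r: "r < n" by simp
      have "(A *\<^sub>v v) $ r = (\<Sum>k<nc. A $$ (r,k) * ((if k = i then 1 else 0) - (if k = j then 1 else 0)))"
        using A r by (simp add: mult_mat_vec_def scalar_prod_def v_def lessThan_atLeast0)
      also have "\<dots> = (\<Sum>k<nc. A $$ (r,k) * (if k = i then 1 else 0)) - (\<Sum>k<nc. A $$ (r,k) * (if k = j then 1 else 0))"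
        by (simp only: right_diff_distrib sum_subtractf)
      also have "\<dots> = A $$ (r,i) - A $$ (r,j)" using c by (simp add: if_distrib[of "\<lambda>x. _ * x"] cong: if_cong)
      also have "\<dots> = 0" using c r A
        by (metis carrier_matD col_def diff_self index_vec)
      finally show "(A *\<^sub>v v) $ r = 0\<^sub>v n $ r" using r by simp
    qed (use A in simp)
    moreover have "v \<noteq> 0\<^sub>v nc"
    proof
      assume "v = 0\<^sub>v nc"
      then have "v $ i = 0" using c by simp
      then show False using c ij unfolding v_def by simp
    qed
    moreover have "v \<in> carrier_vec nc" unfolding v_def by simp
    ultimately show False using ker by blast
  qed
  interpret vs: vec_space "TYPE('a)" n .
  have "vs.lin_indpt (set (cols A))"
  proof
    assume "vs.lin_dep (set (cols A))"
    from vs.lin_depE[OF A this dist] obtain v where "v \<in> carrier_vec nc" "v \<noteq> 0\<^sub>v nc" "A *\<^sub>v v = 0\<^sub>v n" .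
    then show False using ker by blast
  qed
  from vs.lin_indpt_full_rank[OF A dist this] show ?thesis .
qed

lemma Psi_props:
  shows "Psi D \<in> carrier_mat (2 * D - 2) (2 * D - 2) \<and> invertible_mat (Psi D)"
proof -
  let ?n = "D - 1"
  let ?I = "1\<^sub>m ?n :: complex mat"
  define Q where "Q = four_block_mat ((1/2) \<cdot>\<^sub>m ?I) ((1/2) \<cdot>\<^sub>m ?I) ((\<i>/2) \<cdot>\<^sub>m ?I) ((-\<i>/2) \<cdot>\<^sub>m ?I)"
  have e: "2 * D - 2 = ?n + ?n" by simp
  have PC: "Psi D \<in> carrier_mat (2 * D - 2) (2 * D - 2)" unfolding Psi_def e by auto
  have QC: "Q \<in> carrier_mat (2 * D - 2) (2 * D - 2)" unfolding Q_def e by auto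
  have "Psi D * Q = four_block_mat ?I (0\<^sub>m ?n ?n) (0\<^sub>m ?n ?n) ?I"
    unfolding Psi_def Q_def
    by (subst mult_four_block_mat[of _ ?n ?n _ ?n _ ?n], auto intro!: cong_four_block_mat eq_matI simp: field_simps)
  then have PQ: "Psi D * Q = 1\<^sub>m (2 * D - 2)" unfolding e by simp
  have "Q * Psi D = four_block_mat ?I (0\<^sub>m ?n ?n) (0\<^sub>m ?n ?n) ?I"
    unfolding Psi_def Q_def
    by (subst mult_four_block_mat[of _ ?n ?n _ ?n _ ?n], auto intro!: cong_four_block_mat eq_matI simp: field_simps)
  then have QP: "Q * Psi D = 1\<^sub>m (2 * D - 2)" unfolding e by simp
  show ?thesis using PC QC PQ QP unfolding invertible_mat_def inverts_mat_def
    by (intro conjI exI[of _ Q]) auto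
qed

lemma sidx_int:
  assumes "1 \<le> p" "p < q" "q \<le> M"
  shows "2 * int (sidx M p q) = 2 * (int p - 1) * int M + 2 * int q - int p * int p - int p"
proof -
  have ev: "2 * (p * (p + 1) div 2) = p * (p+1)" by simp
  have "(p - 1) * M \<ge> (p - 1) * (p + 1)" using assms by (intro mult_le_mono2) auto
  moreover have "(p - 1) * (p + 1) + (p+1) = p * (p + 1)" using assms
    by (cases p) (auto simp: algebra_simps)
  ultimately have le: "p * (p + 1) \<le> (p - 1) * M + q" using assms by linarith
  then have le2: "p * (p + 1) div 2 \<le> (p - 1) * M + q" by linarith
  have A: "int (sidx M p q) = int ((p - 1) * M + q) - int (p * (p + 1) div 2)"
    unfolding sidx_def using le2 by (simp only: of_nat_diff)
  have B0: "int (2 * (p * (p + 1) div 2)) = int (p * (p+1))" using ev by (rule arg_cong)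
  have B: "2 * int (p * (p + 1) div 2) = int p * int p + int p"
    using B0 unfolding of_nat_mult of_nat_add by (simp add: algebra_simps)
  have C: "int ((p - 1) * M + q) = (int p - 1) * int M + int q" using assms by (simp add: of_nat_diff)
  show ?thesis using A B C by (simp add: algebra_simps)
qed

lemma sidx_int2:
  assumes "1 \<le> p" "p < q" "q \<le> M"
  shows "2 * int (sidx M p q) = 2 * (int p * int M) - 2 * int M + 2 * int q - int p * int p - int p"
  using sidx_int[OF assms] by (simp add: algebra_simps)

lemma sidx_bounds:
  assumes "1 \<le> p" "p < q" "q \<le> M"
  shows "1 \<le> sidx M p q" "sidx M p q \<le> (M * M - M) div 2"
proof -
  note e = sidx_int2[OF assms]
  have h1: "(int p - 1) * int M \<ge> (int p - 1) * (int p + 1)" using assms by (intro mult_left_mono) auto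
  then have h1': "int p * int M - int M \<ge> int p * int p - 1" by (simp add: algebra_simps)
  have "int p * int p \<ge> int p" using assms by simp
  then have "2 * int (sidx M p q) \<ge> 2" using e h1' assms by linarith
  then show "1 \<le> sidx M p q" by linarith
  have h2: "(int M - int p) * (int M - int p - 1) \<ge> 0" using assms by simp
  then have h2': "int M * int M - 2 * (int p * int M) + int p * int p - int M + int p \<ge> 0"
    by (simp add: algebra_simps)
  have "2 * int (sidx M p q) \<le> int M * int M - int M" using e h2' assms by linarith
  moreover have "int (M * M - M) = int M * int M - int M" by (simp add: of_nat_diff)
  ultimately have "int (2 * sidx M p q) \<le> int (M * M - M)" by simp
  then have "2 * sidx M p q \<le> M * M - M" by (simp only: of_nat_le_iff)
  then have "(2 * sidx M p q) div 2 \<le> (M * M - M) div 2" by (rule div_le_mono)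
  then show "sidx M p q \<le> (M * M - M) div 2" by simp
qed

lemma aux_id: fixes x y z d :: int
  shows "2*((x-d)*y) - 2*y + 2*z - (x-d)*(x-d) - (x-d) = 2*(x*y) - 2*(d*y) - 2*y + 2*z - x*x + 2*(d*x) - d*d - x + d"
  by (simp add: algebra_simps)

lemma sidx_less:
  assumes "1 \<le> p" "p < q" "q \<le> M" "1 \<le> p'" "p' < q'" "q' \<le> M" "p < p'"
  shows "sidx M p q < sidx M p' q'"
proof -
  note e = sidx_int2[OF assms(1-3)] sidx_int2[OF assms(4-6)]
  define d where "d = int p' - int p"
  have pd: "int p = int p' - d" unfolding d_def by simp
  have d1: "d \<ge> 1" using assms unfolding d_def by simp
  have h: "(d - 1) * int M \<ge> (d - 1) * (int p' + 1)"
    using assms d1 by (intro mult_left_mono) auto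
  then have h': "d * int M - int M \<ge> d * int p' + d - int p' - 1" by (simp add: algebra_simps)
  have dd: "d * d \<ge> 0" by simp
  have "2 * int (sidx M p q) + d * d + d \<le> 2 * int (sidx M p' q')"
  proof -
    have "2 * int (sidx M p q) = 2 * ((int p' - d) * int M) - 2 * int M + 2 * int q - (int p' - d) * (int p' - d) - (int p' - d)"
      using e(1) unfolding pd .
    also have "\<dots> = 2 * (int p' * int M) - 2 * (d * int M) - 2 * int M + 2 * int q - int p' * int p' + 2 * (d * int p') - d * d - int p' + d"
      by (rule aux_id)
    finally have e1: "2 * int (sidx M p q) = \<dots>" .
    show ?thesis using e1 e(2) h' assms by linarith
  qed
  then show ?thesis using dd d1 by linarith
qed

lemma sidx_inj:
  assumes "1 \<le> p" "p < q" "q \<le> M" "1 \<le> p'" "p' < q'" "q' \<le> M" "sidx M p q = sidx M p' q'"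
  shows "p = p' \<and> q = q'"
proof -
  have "\<not> p < p'" using sidx_less[OF assms(1-6)] assms(7) by auto
  moreover have "\<not> p' < p" using sidx_less[OF assms(4-6) assms(1-3)] assms(7) by auto
  ultimately have pp: "p = p'" by linarith
  have "2 * int (sidx M p q) = 2 * int (sidx M p' q')" using assms(7) by simp
  then have "2 * int q = 2 * int q'"
    using sidx_int2[OF assms(1-3)] sidx_int2[OF assms(4-6)] unfolding pp by linarith
  then show ?thesis using pp by simp
qed

lemma pq_of_sidx:
  assumes "1 \<le> p" "p < q" "q \<le> M"
  shows "pq_of M (sidx M p q) = (p, q)"
  unfolding pq_of_def
proof (rule the_equality)
  show "1 \<le> fst (p, q) \<and> fst (p, q) < snd (p, q) \<and> snd (p, q) \<le> M \<and> sidx M (fst (p, q)) (snd (p, q)) = sidx M p q"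
    using assms by simp
  fix pq :: "nat \<times> nat"
  assume a: "1 \<le> fst pq \<and> fst pq < snd pq \<and> snd pq \<le> M \<and> sidx M (fst pq) (snd pq) = sidx M p q"
  have "fst pq = p \<and> snd pq = q"
    using sidx_inj[of "fst pq" "snd pq" M p q] a assms by blast
  then show "pq = (p, q)" by (simp add: prod_eq_iff)
qed

lemma diag_char:
  assumes "k < M * M"
  shows "(Suc k \<in> diag_idx M) = (k mod M = k div M)"
proof
  assume "Suc k \<in> diag_idx M"
  then obtain i where i: "1 \<le> i" "i \<le> M" "Suc k = (i - 1) * M + i" unfolding diag_idx_def by auto
  then have k: "k = (i - 1) * M + (i - 1)" by simp
  have "i - 1 < M" using i by simp
  then show "k mod M = k div M" unfolding k by simp
next
  assume a: "k mod M = k div M"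
  have M0: "M > 0" using assms by (cases M) auto
  have "k div M < M" using assms by (simp add: less_mult_imp_div_less)
  moreover have "Suc k = (Suc (k div M) - 1) * M + Suc (k div M)"
    using a div_mult_mod_eq[of k M] by simp
  ultimately show "Suc k \<in> diag_idx M" unfolding diag_idx_def
    by (intro CollectI exI[of _ "Suc (k div M)"]) auto
qed

lemma diag_bound: "Suc k \<in> diag_idx M \<Longrightarrow> k < M * M"
proof -
  assume "Suc k \<in> diag_idx M"
  then obtain i where i: "1 \<le> i" "i \<le> M" "Suc k = (i - 1) * M + i" unfolding diag_idx_def by auto
  have "(i - 1) * M \<le> (M - 1) * M" using i by (intro mult_le_mono1) auto
  moreover have "(M - 1) * M + M = M * M" using i by (cases M) auto
  ultimately show ?thesis using i by linarith
qed

definition Sset :: "nat \<Rightarrow> nat set" where "Sset M = {k. Suc k \<notin> diag_idx M}"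

lemma S_infinite: "infinite (Sset M)"
proof
  assume "finite (Sset M)"
  then obtain b where b: "\<forall>n\<in>Sset M. n \<le> b" unfolding finite_nat_set_iff_bounded_le by auto
  have "Suc b + M * M \<in> Sset M" unfolding Sset_def using diag_bound[of "Suc b + M*M" M] by auto
  from bspec[OF b this] show False by simp
qed

lemma C_infinite: "infinite {c::nat. Suc c \<noteq> D}"
proof
  assume "finite {c::nat. Suc c \<noteq> D}"
  then obtain b where b: "\<forall>n\<in>{c::nat. Suc c \<noteq> D}. n \<le> b" unfolding finite_nat_set_iff_bounded_le by auto
  have "b + D + 1 \<in> {c::nat. Suc c \<noteq> D}" by auto
  from bspec[OF b this] show False by simp
qed

lemma card_S: "card {k. k < M * M \<and> k \<in> Sset M} = M * M - M"
proof -
  have M0: "M = 0 \<Longrightarrow> ?thesis" by simp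
  have dg: "{k. k < M * M \<and> k mod M = k div M} = (\<lambda>i. i * M + i) ` {..<M}"
  proof (intro equalityI subsetI)
    fix k assume "k \<in> {k. k < M * M \<and> k mod M = k div M}"
    then have k: "k < M * M" "k mod M = k div M" by auto
    have "k = (k div M) * M + k div M" using k(2) div_mult_mod_eq[of k M] by simp
    moreover have "k div M < M" using k by (simp add: less_mult_imp_div_less)
    ultimately show "k \<in> (\<lambda>i. i * M + i) ` {..<M}" by blast
  next
    fix k assume "k \<in> (\<lambda>i. i * M + i) ` {..<M}"
    then obtain i where i: "i < M" "k = i * M + i" by auto
    have "(i + 1) * M \<le> M * M" using i by (intro mult_le_mono1) auto
    then have "k < M * M" using i by (simp add: algebra_simps)
    moreover have "k mod M = k div M" using i by simp
    ultimately show "k \<in> {k. k < M * M \<and> k mod M = k div M}" by simp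
  qed
  have inj: "inj_on (\<lambda>i. i * M + i) {..<M}"
  proof (rule inj_onI)
    fix x y assume "x \<in> {..<M}" "y \<in> {..<M}" "x * M + x = y * M + y"
    then have "x * (M + 1) = y * (M + 1)" by (simp add: algebra_simps)
    then have "x = y \<or> M + 1 = 0" by (simp only: mult_cancel2)
    then show "x = y" by simp
  qed
  have cd: "card {k. k < M * M \<and> k mod M = k div M} = M"
    unfolding dg using card_image[OF inj] by simp
  have eq: "{k. k < M * M \<and> k \<in> Sset M} = {..<M*M} - {k. k < M * M \<and> k mod M = k div M}"
    unfolding Sset_def using diag_char by auto
  show ?thesis unfolding eq
    by (subst card_Diff_subset) (auto simp: cd)
qed

lemma card_C:
  assumes "D \<ge> 1"
  shows "card {c. c < 2 * D - 1 \<and> c \<in> {c. Suc c \<noteq> D}} = 2 * D - 2"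
proof -
  have "{c. c < 2 * D - 1 \<and> c \<in> {c. Suc c \<noteq> D}} = {..<2*D-1} - {D - 1}" using assms by auto
  then show ?thesis using assms by simp
qed

lemma pick_props:
  assumes "infinite I" "j < card {a. a < n \<and> a \<in> I}"
  shows "pick I j \<in> I" "pick I j < n" "card {a\<in>I. a < pick I j} = j"
  using pick_in_set_inf[OF assms(1)] pick_le[OF assms(2)] card_pick_inf[OF assms(1)] by auto

lemma pick_inv:
  assumes "k \<in> I" "k < n"
  shows "card {a\<in>I. a < k} < card {a. a < n \<and> a \<in> I}" "pick I (card {a\<in>I. a < k}) = k"
proof -
  have "{a\<in>I. a < k} \<subset> {a. a < n \<and> a \<in> I}" using assms by auto
  then show "card {a\<in>I. a < k} < card {a. a < n \<and> a \<in> I}" by (intro psubset_card_mono) auto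
  show "pick I (card {a\<in>I. a < k}) = k" using pick_card_in_set[OF assms(1)] .
qed

lemma pick_eq_iff:
  assumes "infinite I" "k \<in> I"
  shows "(pick I j = k) = (j = card {a\<in>I. a < k})"
  using card_pick_inf[OF assms(1), of j] pick_card_in_set[OF assms(2)] by auto

lemma diffset_eq: "diffset M m = (\<lambda>(p,q). \<bar>m p - m q\<bar>) ` ({1..M} \<times> {1..M})"
  unfolding diffset_def by auto blast

lemma diffset_finite: "finite (diffset M m)"
  unfolding diffset_eq by simp

lemma zero_in_diffset: "M \<ge> 1 \<Longrightarrow> 0 \<in> diffset M m"
  unfolding diffset_def by (rule CollectI, rule exI[of _ 1], rule exI[of _ 1]) auto

lemma numD_pos: "M \<ge> 1 \<Longrightarrow> numD M m \<ge> 1"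
  unfolding numD_def using zero_in_diffset[of M m] diffset_finite[of M m]
  by (metis One_nat_def Suc_leI card_gt_0_iff empty_iff)

lemma lag_facts:
  shows "length (sorted_list_of_set (diffset M m)) = numD M m"
    "set (sorted_list_of_set (diffset M m)) = diffset M m"
    "sorted_wrt (<) (sorted_list_of_set (diffset M m))"
    "distinct (sorted_list_of_set (diffset M m))"
  using diffset_finite[of M m] unfolding numD_def by auto

lemma lag_in: "n < numD M m \<Longrightarrow> lag M m n \<in> diffset M m"
  unfolding lag_def using lag_facts(1,2)[of M m] by (metis nth_mem)

lemma lag_inj: "n < numD M m \<Longrightarrow> n' < numD M m \<Longrightarrow> lag M m n = lag M m n' \<Longrightarrow> n = n'"
  unfolding lag_def using lag_facts(1,4)[of M m] nth_eq_iff_index_eq by metis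

lemma lag_nonneg: "n < numD M m \<Longrightarrow> lag M m n \<ge> 0"
  using lag_in[of n M m] unfolding diffset_def by auto

lemma lag_pos: "0 < n \<Longrightarrow> n < numD M m \<Longrightarrow> lag M m n > 0"
proof -
  assume a: "0 < n" "n < numD M m"
  have "lag M m 0 < lag M m n" unfolding lag_def
    using sorted_wrt_nth_less[OF lag_facts(3)[of M m] a(1)] a(2) lag_facts(1)[of M m] by simp
  moreover have "lag M m 0 \<ge> 0" using lag_nonneg[of 0 M m] a by simp
  ultimately show ?thesis by simp
qed

lemma lag_pair:
  assumes "n < numD M m"
  obtains p q where "p \<in> {1..M}" "q \<in> {1..M}" "m p - m q = lag M m n"
proof -
  from lag_in[OF assms] obtain p q where pq: "p \<in> {1..M}" "q \<in> {1..M}" "lag M m n = \<bar>m p - m q\<bar>"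
    unfolding diffset_def by auto
  show ?thesis
  proof (cases "m p - m q \<ge> 0")
    case True then show ?thesis using that[of p q] pq by simp
  next
    case False then show ?thesis using that[of q p] pq by simp
  qed
qed

lemma Jmat_entry:
  assumes "k < M * M" "c < 2 * numD M m - 1"
  shows "Jmat M m $$ (k,c) = (if c < numD M m - 1
     then (if m (k div M + 1) - m (k mod M + 1) = lag M m (numD M m - 1 - c) then 1 else 0)
     else (if m (k mod M + 1) - m (k div M + 1) = lag M m (c - (numD M m - 1)) then 1 else 0))"
proof -
  have M0: "M > 0" using assms by (cases M) auto
  have dm: "k div M < M" "k mod M < M" using assms M0 by (auto simp: less_mult_imp_div_less)
  show ?thesis
    unfolding Jmat_def Let_def using assms dm
    by (simp add: vecm_def Lmat_def)
qed

lemma kdivmod: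
  fixes a b M :: nat
  assumes "a < M" "b < M"
  shows "(a * M + b) div M = a" "(a * M + b) mod M = b" "a * M + b < M * M"
proof -
  have M0: "M \<noteq> 0" using assms by simp
  show "(a * M + b) div M = a" "(a * M + b) mod M = b" using assms M0
    by (simp_all add: div_mult_self3 mod_mult_self3)
  have "(a + 1) * M \<le> M * M" using assms by (intro mult_le_mono1) auto
  then show "a * M + b < M * M" using assms by (simp add: algebra_simps)
qed

lemma row_exists:
  assumes M1: "M \<ge> 1" and c: "c < 2 * numD M m - 1" "c \<noteq> numD M m - 1"
  shows "\<exists>k<M*M. k mod M \<noteq> k div M \<and> Jmat M m $$ (k,c) = 1 \<and>
           (\<forall>c''<2 * numD M m - 1. c'' \<noteq> numD M m - 1 \<longrightarrow> c'' \<noteq> c \<longrightarrow> Jmat M m $$ (k,c'') = 0)"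
proof (cases "c < numD M m - 1")
  case True
  define D where "D = numD M m"
  define n where "n = D - 1 - c"
  have n: "0 < n" "n < D" using True unfolding n_def D_def by auto
  obtain p q where pq: "p \<in> {1..M}" "q \<in> {1..M}" "m p - m q = lag M m n"
    using lag_pair[of n M m] n unfolding D_def by blast
  have lp: "lag M m n > 0" using lag_pos[of n M m] n unfolding D_def by simp
  have pq': "p \<noteq> q" using pq lp by auto
  define k where "k = (p - 1) * M + (q - 1)"
  have kk: "k div M = p - 1" "k mod M = q - 1" "k < M * M"
    unfolding k_def using pq by (rule_tac kdivmod; auto)+
  have kp: "k div M + 1 = p" "k mod M + 1 = q" using kk pq by auto
  show ?thesis
  proof (intro exI[of _ k] conjI allI impI)
    show "k < M * M" "k mod M \<noteq> k div M" using kk pq pq' by auto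
    show "Jmat M m $$ (k, c) = 1" using Jmat_entry[OF kk(3) c(1)] True pq(3) unfolding kp n_def D_def by simp
    fix c'' assume c'': "c'' < 2 * numD M m - 1" "c'' \<noteq> numD M m - 1" "c'' \<noteq> c"
    show "Jmat M m $$ (k, c'') = 0"
    proof (cases "c'' < numD M m - 1")
      case True2: True
      have "lag M m (D - 1 - c'') \<noteq> lag M m n"
      proof
        assume "lag M m (D - 1 - c'') = lag M m n"
        from lag_inj[OF _ _ this] have "D - 1 - c'' = n" using n True2 unfolding D_def by simp
        then show False using c'' True True2 unfolding n_def D_def by simp
      qed
      then show ?thesis using Jmat_entry[OF kk(3) c''(1)] True2 pq(3) unfolding kp D_def by simp
    next
      case False
      have "lag M m (c'' - (D - 1)) \<ge> 0" using lag_nonneg[of "c'' - (D - 1)" M m] c'' unfolding D_def by simp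
      then have "m q - m p \<noteq> lag M m (c'' - (D - 1))" using pq(3) lp by simp
      then show ?thesis using Jmat_entry[OF kk(3) c''(1)] False unfolding kp D_def by simp
    qed
  qed
next
  case False
  define D where "D = numD M m"
  define n where "n = c - (D - 1)"
  have n: "0 < n" "n < D" using False c unfolding n_def D_def by auto
  obtain p q where pq: "p \<in> {1..M}" "q \<in> {1..M}" "m p - m q = lag M m n"
    using lag_pair[of n M m] n unfolding D_def by blast
  have lp: "lag M m n > 0" using lag_pos[of n M m] n unfolding D_def by simp
  have pq': "p \<noteq> q" using pq lp by auto
  define k where "k = (q - 1) * M + (p - 1)"
  have kk: "k div M = q - 1" "k mod M = p - 1" "k < M * M"
    unfolding k_def using pq by (rule_tac kdivmod; auto)+
  have kp: "k div M + 1 = q" "k mod M + 1 = p" using kk pq by auto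
  show ?thesis
  proof (intro exI[of _ k] conjI allI impI)
    show "k < M * M" "k mod M \<noteq> k div M" using kk pq pq' by auto
    show "Jmat M m $$ (k, c) = 1" using Jmat_entry[OF kk(3) c(1)] False pq(3) unfolding kp n_def D_def by simp
    fix c'' assume c'': "c'' < 2 * numD M m - 1" "c'' \<noteq> numD M m - 1" "c'' \<noteq> c"
    show "Jmat M m $$ (k, c'') = 0"
    proof (cases "c'' < numD M m - 1")
      case True
      have "lag M m (D - 1 - c'') \<ge> 0" using lag_nonneg[of "D - 1 - c''" M m] c'' True unfolding D_def by simp
      then have "m q - m p \<noteq> lag M m (D - 1 - c'')" using pq(3) lp by simp
      then show ?thesis using Jmat_entry[OF kk(3) c''(1)] True unfolding kp D_def by simp
    next
      case False2: False
      have "lag M m (c'' - (D - 1)) \<noteq> lag M m n"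
      proof
        assume "lag M m (c'' - (D - 1)) = lag M m n"
        from lag_inj[OF _ _ this] have "c'' - (D - 1) = n" using n False2 c'' unfolding D_def by simp
        then show False using c'' False False2 unfolding n_def D_def by simp
      qed
      then show ?thesis using Jmat_entry[OF kk(3) c''(1)] False2 pq(3) unfolding kp D_def by simp
    qed
  qed
qed

lemma Jbar_alt: "Jbar M m = submatrix (Jmat M m) (Sset M) {c. Suc c \<noteq> numD M m}"
  unfolding Jbar_def Sset_def ..

lemma Jmat_dims: "dim_row (Jmat M m) = M * M" "dim_col (Jmat M m) = 2 * numD M m - 1"
  unfolding Jmat_def Let_def by (simp_all only: dim_row_mat dim_col_mat)

lemma Jbar_carrier:
  assumes "M \<ge> 1"
  shows "Jbar M m \<in> carrier_mat (M*M - M) (2 * numD M m - 2)"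
  unfolding Jbar_alt carrier_mat_def using card_S[of M] card_C[OF numD_pos[OF assms, of m]]
  by (simp add: dim_submatrix Jmat_dims)

lemma pick_inj_inf:
  assumes "infinite I" "pick I a = pick I b" shows "a = b"
proof -
  have "a = card {x\<in>I. x < pick I a}" using card_pick_inf[OF assms(1), of a] by (rule sym)
  also have "\<dots> = card {x\<in>I. x < pick I b}" unfolding assms(2) ..
  also have "\<dots> = b" using card_pick_inf[OF assms(1), of b] .
  finally show ?thesis .
qed

lemma Jbar_ker:
  assumes M1: "M \<ge> 1" and v: "v \<in> carrier_vec (2 * numD M m - 2)"
    and z: "Jbar M m *\<^sub>v v = 0\<^sub>v (M*M - M)"
  shows "v = 0\<^sub>v (2 * numD M m - 2)"
proof (rule eq_vecI)
  define D where "D = numD M m"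
  define C where "C = {c. Suc c \<noteq> D}"
  define nc where "nc = 2 * D - 2"
  define nr where "nr = M * M - M"
  have D1: "D \<ge> 1" unfolding D_def using numD_pos[OF M1] .
  have cardC: "card {c. c < dim_col (Jmat M m) \<and> c \<in> C} = nc"
    unfolding C_def nc_def Jmat_dims D_def using card_C[OF numD_pos[OF M1, of m]] by simp
  have cardI: "card {k. k < dim_row (Jmat M m) \<and> k \<in> Sset M} = nr"
    unfolding nr_def Jmat_dims using card_S by simp
  have Jb: "Jbar M m = submatrix (Jmat M m) (Sset M) C" unfolding Jbar_alt C_def D_def ..
  have entry: "Jbar M m $$ (j, c) = Jmat M m $$ (pick (Sset M) j, pick C c)" if "j < nr" "c < nc" for j c
    unfolding Jb using submatrix_index[of j "Jmat M m" "Sset M" c C] that cardC cardI by simp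
  have dimJ: "dim_row (Jbar M m) = nr" "dim_col (Jbar M m) = nc"
    using Jbar_carrier[OF M1, of m] unfolding nr_def nc_def D_def by auto
  have Cinf: "infinite C" unfolding C_def by (rule C_infinite)
  fix c assume "c < dim_vec (0\<^sub>v (2 * numD M m - 2) :: complex vec)"
  then have c: "c < nc" unfolding nc_def D_def by simp
  define c' where "c' = pick C c"
  have c': "c' \<in> C" "c' < 2 * D - 1"
    using pick_props[OF Cinf, of c "dim_col (Jmat M m)"] cardC c unfolding c'_def Jmat_dims D_def by auto
  obtain k where k: "k < M * M" "k mod M \<noteq> k div M" "Jmat M m $$ (k, c') = 1"
    "\<And>c''. c'' < 2 * D - 1 \<Longrightarrow> c'' \<noteq> D - 1 \<Longrightarrow> c'' \<noteq> c' \<Longrightarrow> Jmat M m $$ (k, c'') = 0"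
  proof -
    have "c' \<noteq> D - 1" using c' D1 unfolding C_def by auto
    from row_exists[OF M1, of c' m] this c'(2) show ?thesis using that unfolding D_def by blast
  qed
  have kI: "k \<in> Sset M" unfolding Sset_def using diag_char[OF k(1)] k(2) by simp
  define j0 where "j0 = card {a \<in> Sset M. a < k}"
  have j0: "j0 < nr" "pick (Sset M) j0 = k"
    using pick_inv[OF kI k(1)] cardI unfolding j0_def Jmat_dims by auto
  have row: "Jbar M m $$ (j0, c2) = (if c2 = c then 1 else 0)" if c2: "c2 < nc" for c2
  proof -
    have pc2: "pick C c2 \<in> C" "pick C c2 < 2 * D - 1"
      using pick_props[OF Cinf, of c2 "dim_col (Jmat M m)"] cardC c2 unfolding Jmat_dims D_def by auto
    show ?thesis
    proof (cases "c2 = c")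
      case True then show ?thesis using entry[OF j0(1) c2] j0(2) k(3) unfolding c'_def by simp
    next
      case False
      then have "pick C c2 \<noteq> c'" unfolding c'_def using pick_inj_inf[OF Cinf] by blast
      moreover have "pick C c2 \<noteq> D - 1" using pc2 D1 unfolding C_def by auto
      ultimately show ?thesis using entry[OF j0(1) c2] j0(2) k(4)[OF pc2(2)] False by simp
    qed
  qed
  have "(Jbar M m *\<^sub>v v) $ j0 = (\<Sum>c2<nc. Jbar M m $$ (j0, c2) * v $ c2)"
    using dimJ j0 v unfolding nc_def D_def by (simp add: mult_mat_vec_def scalar_prod_def lessThan_atLeast0)
  also have "\<dots> = (\<Sum>c2<nc. (if c2 = c then v $ c else 0))"
    by (rule sum.cong) (auto simp: row)
  also have "\<dots> = v $ c" using c by simp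
  finally have "v $ c = 0" using z j0 unfolding nr_def by simp
  then show "v $ c = 0\<^sub>v (2 * numD M m - 2) $ c" using c unfolding nc_def D_def by simp
qed (use v in simp)

lemma even_MM: "even (M * M - M :: nat)"
proof -
  have "M * M - M = M * (M - 1)" by (simp add: diff_mult_distrib2)
  moreover have "even (M * (M - 1))" by (cases M) auto
  ultimately show ?thesis by simp
qed

lemma Ffull_entry:
  assumes r: "r < (M * M - M) div 2" and k: "k < M * M" and pq: "pq_of M (Suc r) = (p, q)"
  shows "Fdd_full M $$ (r, k) = (if k = (p-1)*M+(q-1) then 1 else 0) + (if k = (q-1)*M+(p-1) then 1 else 0)"
    "Ftil_full M $$ (r, k) = (if k = (p-1)*M+(q-1) then 1 else 0) - (if k = (q-1)*M+(p-1) then 1 else 0)"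
proof -
  have "Fdd_full M $$ (r, k) = (kron_e M p q + kron_e M q p) $ k"
    unfolding Fdd_full_def using r k pq by (simp only: index_mat(1) dim_row_mat dim_col_mat) simp
  also have "\<dots> = kron_e M p q $ k + kron_e M q p $ k"
    using k unfolding kron_e_def by simp
  finally show "Fdd_full M $$ (r, k) = (if k = (p-1)*M+(q-1) then 1 else 0) + (if k = (q-1)*M+(p-1) then 1 else 0)"
    using k unfolding kron_e_def by simp
  have "Ftil_full M $$ (r, k) = (kron_e M p q - kron_e M q p) $ k"
    unfolding Ftil_full_def using r k pq by (simp only: index_mat(1) dim_row_mat dim_col_mat) simp
  also have "\<dots> = kron_e M p q $ k - kron_e M q p $ k"
    using k unfolding kron_e_def by simp
  finally show "Ftil_full M $$ (r, k) = (if k = (p-1)*M+(q-1) then 1 else 0) - (if k = (q-1)*M+(p-1) then 1 else 0)"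
    using k unfolding kron_e_def by simp
qed

lemma Fsub_entry:
  assumes r: "r < (M * M - M) div 2" and j: "j < M * M - M"
  shows "Fdd M $$ (r, j) = Fdd_full M $$ (r, pick (Sset M) j)"
    "Ftil M $$ (r, j) = Ftil_full M $$ (r, pick (Sset M) j)"
proof -
  have d: "dim_row (Fdd_full M) = (M * M - M) div 2" "dim_col (Fdd_full M) = M * M"
    "dim_row (Ftil_full M) = (M * M - M) div 2" "dim_col (Ftil_full M) = M * M"
    unfolding Fdd_full_def Ftil_full_def by (simp_all only: dim_row_mat dim_col_mat)
  have c1: "card {i. i < (M * M - M) div 2 \<and> i \<in> UNIV} = (M * M - M) div 2" by simp
  have c2: "card {i. i < M * M \<and> i \<in> {k. Suc k \<notin> diag_idx M}} = M * M - M"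
    using card_S[of M] unfolding Sset_def .
  show "Fdd M $$ (r, j) = Fdd_full M $$ (r, pick (Sset M) j)"
    unfolding Fdd_def using submatrix_index[of r "Fdd_full M" UNIV j "{k. Suc k \<notin> diag_idx M}"] r j
    unfolding d c1 c2 pick_UNIV Sset_def by simp
  show "Ftil M $$ (r, j) = Ftil_full M $$ (r, pick (Sset M) j)"
    unfolding Ftil_def using submatrix_index[of r "Ftil_full M" UNIV j "{k. Suc k \<notin> diag_idx M}"] r j
    unfolding d c1 c2 pick_UNIV Sset_def by simp
qed

lemma Fmat_carrier: "Fmat M \<in> carrier_mat (M*M - M) (M*M - M)"
  unfolding Fmat_def Let_def by (rule mat_carrier)

lemma Fmat_entry:
  assumes "i < M * M - M" "j < M * M - M"
  shows "Fmat M $$ (i, j) = (if i < (M * M - M) div 2 then Fdd M $$ (i,j) / 2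
          else \<i> * Ftil M $$ (i - (M * M - M) div 2, j) / 2)"
  unfolding Fmat_def Let_def using assms by (simp only: index_mat(1) case_prod_conv)

lemma F_ker:
  assumes M1: "M \<ge> 1" and v: "v \<in> carrier_vec (M * M - M)"
    and z: "Fmat M *\<^sub>v v = 0\<^sub>v (M * M - M)"
  shows "v = 0\<^sub>v (M * M - M)"
proof (rule eq_vecI)
  define n where "n = M * M - M"
  define N where "N = (M * M - M) div 2"
  define S where "S = Sset M"
  have nN: "n = N + N"
  proof -
    obtain t where t: "M * M - M = 2 * t" using even_MM[of M] by (rule evenE)
    show ?thesis unfolding n_def N_def t by simp
  qed
  have Sinf: "infinite S" unfolding S_def by (rule S_infinite)
  have cardS: "card {a. a < M * M \<and> a \<in> S} = n" unfolding S_def n_def by (rule card_S)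
  have M0: "M > 0" using M1 by simp
  have dimF: "dim_row (Fmat M) = n" "dim_col (Fmat M) = n" using Fmat_carrier[of M] unfolding n_def by auto
  have mv: "(Fmat M *\<^sub>v v) $ i = (\<Sum>j'<n. Fmat M $$ (i, j') * v $ j')" if "i < n" for i
    using dimF v that unfolding n_def by (simp add: mult_mat_vec_def scalar_prod_def lessThan_atLeast0)
  fix j assume "j < dim_vec (0\<^sub>v (M * M - M) :: complex vec)"
  then have j: "j < n" unfolding n_def by simp
  define k where "k = pick S j"
  have k: "k \<in> S" "k < M * M" "card {x\<in>S. x < k} = j"
    using pick_props[OF Sinf, of j "M*M"] cardS j unfolding k_def by auto
  define a where "a = k div M"
  define b where "b = k mod M"
  have ab: "a \<noteq> b" "a < M" "b < M" "k = a * M + b"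
    using k(1,2) diag_char[OF k(2)] M0 unfolding S_def Sset_def a_def b_def
    by (auto simp: less_mult_imp_div_less)
  define p0 where "p0 = min a b + 1"
  define q0 where "q0 = max a b + 1"
  have pq0: "1 \<le> p0" "p0 < q0" "q0 \<le> M" using ab unfolding p0_def q0_def by auto
  define r where "r = sidx M p0 q0 - 1"
  have r: "Suc r = sidx M p0 q0" "r < N" using sidx_bounds[OF pq0] unfolding r_def N_def by auto
  have pqr: "pq_of M (Suc r) = (p0, q0)" unfolding r(1) by (rule pq_of_sidx[OF pq0])
  define k1 where "k1 = (p0 - 1) * M + (q0 - 1)"
  define k2 where "k2 = (q0 - 1) * M + (p0 - 1)"
  have k12: "k1 < M * M" "k2 < M * M" "k1 \<in> S" "k2 \<in> S" "k1 \<noteq> k2" "k = k1 \<or> k = k2"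
  proof -
    have m1: "p0 - 1 < M" "q0 - 1 < M" "p0 - 1 \<noteq> q0 - 1" using pq0 by auto
    note d1 = kdivmod[OF m1(1) m1(2)] and d2 = kdivmod[OF m1(2) m1(1)]
    show "k1 < M * M" "k2 < M * M" unfolding k1_def k2_def using d1 d2 by auto
    show "k1 \<in> S" unfolding S_def Sset_def k1_def using diag_char[OF d1(3)] d1 m1 by simp
    show "k2 \<in> S" unfolding S_def Sset_def k2_def using diag_char[OF d2(3)] d2 m1 by simp
    show "k1 \<noteq> k2" unfolding k1_def k2_def using d1 d2 m1 by metis
    show "k = k1 \<or> k = k2" unfolding k1_def k2_def p0_def q0_def using ab
      by (cases "a < b") (auto simp: min_def max_def)
  qed
  define j1 where "j1 = card {x\<in>S. x < k1}"
  define j2 where "j2 = card {x\<in>S. x < k2}"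
  have j12: "j1 < n" "j2 < n" "j = j1 \<or> j = j2" "j1 \<noteq> j2"
    using pick_inv[OF k12(3) k12(1)] pick_inv[OF k12(4) k12(2)] cardS k(3) k12(5,6)
    unfolding j1_def j2_def by auto
  have peq: "(pick S j' = k1) = (j' = j1)" "(pick S j' = k2) = (j' = j2)" for j'
    using pick_eq_iff[OF Sinf k12(3)] pick_eq_iff[OF Sinf k12(4)] unfolding j1_def j2_def by auto
  have row1: "Fmat M $$ (r, j') * v $ j' = (if j' = j1 then v $ j1 / 2 else 0) + (if j' = j2 then v $ j2 / 2 else 0)"
    if "j' < n" for j'
  proof -
    have pk: "pick S j' < M * M" using pick_props[OF Sinf, of j' "M*M"] cardS that by auto
    have "Fmat M $$ (r, j') = Fdd_full M $$ (r, pick S j') / 2"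
      using Fmat_entry[of r M j'] Fsub_entry(1)[of r M j'] r that nN unfolding n_def N_def S_def by auto
    also have "\<dots> = ((if j' = j1 then 1 else 0) + (if j' = j2 then 1 else 0)) / 2"
      using Ffull_entry(1)[OF _ pk pqr] r peq unfolding N_def k1_def k2_def by simp
    finally show ?thesis by (auto simp: field_simps)
  qed
  have row2: "Fmat M $$ (N + r, j') * v $ j' = (if j' = j1 then \<i> * v $ j1 / 2 else 0) - (if j' = j2 then \<i> * v $ j2 / 2 else 0)"
    if "j' < n" for j'
  proof -
    have pk: "pick S j' < M * M" using pick_props[OF Sinf, of j' "M*M"] cardS that by auto
    have "Fmat M $$ (N + r, j') = \<i> * Ftil_full M $$ (r, pick S j') / 2"
      using Fmat_entry[of "N + r" M j'] Fsub_entry(2)[of r M j'] r that nN unfolding n_def N_def S_def by auto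
    also have "\<dots> = \<i> * ((if j' = j1 then 1 else 0) - (if j' = j2 then 1 else 0)) / 2"
      using Ffull_entry(2)[OF _ pk pqr] r peq unfolding N_def k1_def k2_def by simp
    finally have e: "Fmat M $$ (N + r, j') = \<i> * ((if j' = j1 then 1 else 0) - (if j' = j2 then 1 else 0)) / 2" .
    show ?thesis unfolding e using j12(4) by (cases "j' = j1"; cases "j' = j2") simp_all
  qed
  have "0 = (Fmat M *\<^sub>v v) $ r" using z r nN unfolding n_def N_def by simp
  also have "\<dots> = (\<Sum>j'<n. (if j' = j1 then v $ j1 / 2 else 0) + (if j' = j2 then v $ j2 / 2 else 0))"
    unfolding mv[of r, OF _] using r nN by (intro trans[OF mv] sum.cong) (auto simp: row1)
  also have "\<dots> = v $ j1 / 2 + v $ j2 / 2" using j12 by (simp add: sum.distrib)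
  finally have "(v $ j1 + v $ j2) / 2 = 0" by (simp add: add_divide_distrib)
  then have e1: "v $ j1 + v $ j2 = 0" by simp
  have "0 = (Fmat M *\<^sub>v v) $ (N + r)" using z r nN unfolding n_def N_def by simp
  also have "\<dots> = (\<Sum>j'<n. (if j' = j1 then \<i> * v $ j1 / 2 else 0) - (if j' = j2 then \<i> * v $ j2 / 2 else 0))"
    using r nN by (intro trans[OF mv] sum.cong) (auto simp: row2)
  also have "\<dots> = \<i> * v $ j1 / 2 - \<i> * v $ j2 / 2" using j12 by (simp add: sum_subtractf)
  finally have "\<i> * (v $ j1 - v $ j2) / 2 = 0" by (simp add: right_diff_distrib diff_divide_distrib)
  then have e2: "v $ j1 - v $ j2 = 0" by simp
  from e1 e2 have "v $ j1 = 0" "v $ j2 = 0" by (simp_all add: algebra_simps)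
  then show "v $ j = 0\<^sub>v (M * M - M) $ j" using j12(3) j unfolding n_def by auto
qed (use v in simp)

theorem lemma2:
  fixes M :: nat and m :: "nat \<Rightarrow> int"
  assumes "M \<ge> 1" and "inj_on m {1..M}"
  shows "Psi (numD M m) \<in> carrier_mat (2 * numD M m - 2) (2 * numD M m - 2)
         \<and> invertible_mat (Psi (numD M m))
         \<and> Fmat M \<in> carrier_mat (M*M - M) (M*M - M)
         \<and> invertible_mat (Fmat M)
         \<and> Jbar M m \<in> carrier_mat (M*M - M) (2 * numD M m - 2)
         \<and> vec_space.rank (M*M - M) (Jbar M m) = 2 * numD M m - 2"
proof -
  have P: "Psi (numD M m) \<in> carrier_mat (2 * numD M m - 2) (2 * numD M m - 2)
         \<and> invertible_mat (Psi (numD M m))" by (rule Psi_props)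
  have F: "invertible_mat (Fmat M)"
    by (rule inv_of_ker[OF Fmat_carrier]) (rule F_ker[OF assms(1)])
  have J: "vec_space.rank (M*M - M) (Jbar M m) = 2 * numD M m - 2"
    by (rule rank_of_ker[OF Jbar_carrier[OF assms(1)]]) (rule Jbar_ker[OF assms(1)])
  show ?thesis using P F J Fmat_carrier[of M] Jbar_carrier[OF assms(1), of m] by blast
qed

end
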